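(* Let $g:\mathbb{Z}^d\to[0,\infty)$ be of the form $g(z)=\prod_{i=1}^d g_i(z_i)$, where each $g_i:\mathbb{Z}\to[0,\infty)$ is summable and log-concave. Let $f:\mathbb{Z}^d\to[0,\infty)$ be summable and log-supermodular. Then $f*g(x)=\sum_{z\in\mathbb{Z}^d}f(x-z)g(z)$ is log-supermodular on $\mathbb{Z}^d$.
   Context: A function $h:\mathbb{Z}\to[0,\infty)$ is log-concave if $\{h>0\}=I\cap\mathbb{Z}$ for some (possibly infinite) interval $I\subseteq\mathbb{R}$ and $h(n)^2\ge h(n+1)h(n-1)$ for all $n\in I$ (equivalently, $h$ admits a log-concave interpolation on $\mathbb{R}$). For $x,y\in\mathbb{Z}^d$, $(x\wedge y)_i=\min(x_i,y_i)$, $(x\vee y)_i=\max(x_i,y_i)$; $f$ is log-supermodular if $f(x)f(y)\le f(x\wedge y)f(x\vee y)$ for all $x,y\in\mathbb{Z}^d$. *)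

theory Defs
  imports "HOL-Analysis.Analysis"
begin

text \<open>Points of Z^d are represented as vectors of type int ^ 'd, with 'd a finite index type
  (d = CARD('d)).\<close>

definition vmin :: "int ^ 'd \<Rightarrow> int ^ 'd \<Rightarrow> int ^ 'd" where
  "vmin x y = (\<chi> i. min (x $ i) (y $ i))"

definition vmax :: "int ^ 'd \<Rightarrow> int ^ 'd \<Rightarrow> int ^ 'd" where
  "vmax x y = (\<chi> i. max (x $ i) (y $ i))"

definition log_supermodular :: "(int ^ 'd \<Rightarrow> real) \<Rightarrow> bool" where
  "log_supermodular f \<longleftrightarrow> (\<forall>x y. f x * f y \<le> f (vmin x y) * f (vmax x y))"

definition is_real_interval :: "real set \<Rightarrow> bool" where
  "is_real_interval I \<longleftrightarrow> (\<forall>a\<in>I. \<forall>b\<in>I. \<forall>c. a \<le> c \<and> c \<le> b \<longrightarrow> c \<in> I)"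

definition log_concave_int :: "(int \<Rightarrow> real) \<Rightarrow> bool" where
  "log_concave_int h \<longleftrightarrow> (\<exists>I. is_real_interval I \<and>
      {n. h n > 0} = {n. real_of_int n \<in> I} \<and>
      (\<forall>n. real_of_int n \<in> I \<longrightarrow> h n ^ 2 \<ge> h (n + 1) * h (n - 1)))"

definition conv :: "(int ^ 'd \<Rightarrow> real) \<Rightarrow> (int ^ 'd \<Rightarrow> real) \<Rightarrow> int ^ 'd \<Rightarrow> real" where
  "conv f g x = (\<Sum>\<^sub>\<infinity>z\<in>UNIV. f (x - z) * g z)"

end

theory Submission
  imports Defs
begin


lemma pair_ineq:
  fixes \<alpha> \<beta> \<gamma> \<delta> :: real
  assumes "0 \<le> \<alpha>" "0 \<le> \<beta>" "0 \<le> \<gamma>" "0 \<le> \<delta>" "\<alpha> \<le> \<gamma>" "\<beta> \<le> \<gamma>" "\<alpha> * \<beta> \<le> \<gamma> * \<delta>"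
  shows "\<alpha> + \<beta> \<le> \<gamma> + \<delta>"
proof (cases "\<gamma> = 0")
  case True then show ?thesis using assms by auto
next
  case False
  then have g: "\<gamma> > 0" using assms by auto
  have "0 \<le> (\<gamma> - \<alpha>) * (\<gamma> - \<beta>)" using assms by auto
  then have "\<gamma> * (\<alpha> + \<beta>) \<le> \<gamma> * \<gamma> + \<alpha> * \<beta>" by (simp add: algebra_simps)
  also have "\<dots> \<le> \<gamma> * (\<gamma> + \<delta>)" using assms by (simp add: algebra_simps)
  finally show ?thesis using g by (simp add: mult_le_cancel_left)
qed

lemma summable_prod2:
  fixes a :: "'a \<Rightarrow> real" and b :: "'b \<Rightarrow> real"
  assumes "a summable_on A" "b summable_on B" "\<And>x. a x \<ge> 0" "\<And>x. b x \<ge> 0"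
  shows "(\<lambda>(x,y). a x * b y) summable_on (A \<times> B)"
proof -
  have "(\<lambda>p. (\<lambda>(x,y). a x * b y) p) summable_on Sigma A (\<lambda>_. B)"
  proof (rule summable_on_SigmaI[where g = "\<lambda>x. a x * infsum b B"])
    fix x assume "x \<in> A"
    show "((\<lambda>y. (\<lambda>(x,y). a x * b y) (x, y)) has_sum a x * infsum b B) B"
      using assms(2) by (simp add: has_sum_cmult_right)
  next
    show "(\<lambda>x. a x * infsum b B) summable_on A" using assms(1) by (rule summable_on_cmult_left)
  next
    fix x y show "0 \<le> (\<lambda>(x,y). a x * b y) (x, y)" using assms by simp
  qed
  then show ?thesis by simp
qed

lemma infsum_prod2:
  fixes a :: "'a \<Rightarrow> real" and b :: "'b \<Rightarrow> real"
  assumes "a summable_on A" "b summable_on B" "\<And>x. a x \<ge> 0" "\<And>x. b x \<ge> 0"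
  shows "infsum a A * infsum b B = infsum (\<lambda>(x,y). a x * b y) (A \<times> B)"
proof -
  have "infsum (\<lambda>(x,y). a x * b y) (A \<times> B) = infsum (\<lambda>x. infsum (\<lambda>y. a x * b y) B) A"
    using infsum_Sigma_banach[OF summable_prod2[OF assms]] by simp
  also have "\<dots> = infsum (\<lambda>x. a x * infsum b B) A"
    by (simp add: infsum_cmult_right')
  also have "\<dots> = infsum a A * infsum b B" by (simp add: infsum_cmult_left')
  finally show ?thesis by simp
qed

lemma four_chain:
  fixes p1 p2 p3 p4 :: "int \<Rightarrow> real"
  assumes nn: "\<And>s. p1 s \<ge> 0" "\<And>s. p2 s \<ge> 0" "\<And>s. p3 s \<ge> 0" "\<And>s. p4 s \<ge> 0"
    and sm: "p1 summable_on UNIV" "p2 summable_on UNIV" "p3 summable_on UNIV" "p4 summable_on UNIV"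
    and H: "\<And>s t. p1 s * p2 t \<le> p3 (min s t) * p4 (max s t)"
  shows "infsum p1 UNIV * infsum p2 UNIV \<le> infsum p3 UNIV * infsum p4 UNIV"
proof -
  define P where "P = (\<lambda>(s,t). p1 s * p2 t)"
  define Q where "Q = (\<lambda>(s,t). p3 s * p4 t)"
  have sP: "P summable_on UNIV" unfolding P_def using summable_prod2[OF sm(1,2) nn(1,2)] by simp
  have sQ: "Q summable_on UNIV" unfolding Q_def using summable_prod2[OF sm(3,4) nn(3,4)] by simp
  have bij: "bij_betw prod.swap (UNIV :: (int \<times> int) set) UNIV" by (simp add: bij_swap)
  have sP': "(\<lambda>x. P (prod.swap x)) summable_on UNIV" using summable_on_reindex_bij_betw[OF bij] sP by blast
  have sQ': "(\<lambda>x. Q (prod.swap x)) summable_on UNIV" using summable_on_reindex_bij_betw[OF bij] sQ by blast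
  have eP: "infsum (\<lambda>x. P (prod.swap x)) UNIV = infsum P UNIV" by (rule infsum_reindex_bij_betw[OF bij])
  have eQ: "infsum (\<lambda>x. Q (prod.swap x)) UNIV = infsum Q UNIV" by (rule infsum_reindex_bij_betw[OF bij])
  have pw: "P x + P (prod.swap x) \<le> Q x + Q (prod.swap x)" for x
  proof -
    obtain s t where x: "x = (s,t)" by (cases x)
    consider "s < t" | "s = t" | "t < s" by linarith
    then show ?thesis
    proof cases
      case 1
      have "p1 s * p2 t + p1 t * p2 s \<le> p3 s * p4 t + p3 t * p4 s"
      proof (rule pair_ineq)
        show "p1 s * p2 t \<le> p3 s * p4 t" using H[of s t] 1 by simp
        show "p1 t * p2 s \<le> p3 s * p4 t" using H[of t s] 1 by simp
        have "(p1 s * p2 t) * (p1 t * p2 s) = (p1 s * p2 s) * (p1 t * p2 t)" by simp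
        also have "\<dots> \<le> (p3 s * p4 s) * (p3 t * p4 t)"
          using mult_mono[OF H[of s s] H[of t t]] nn by simp
        also have "\<dots> = (p3 s * p4 t) * (p3 t * p4 s)" by simp
        finally show "(p1 s * p2 t) * (p1 t * p2 s) \<le> (p3 s * p4 t) * (p3 t * p4 s)" .
      qed (auto intro: mult_nonneg_nonneg nn)
      then show ?thesis unfolding x P_def Q_def by simp
    next
      case 2 then show ?thesis using H[of s s] unfolding x P_def Q_def by simp
    next
      case 3
      have "p1 t * p2 s + p1 s * p2 t \<le> p3 t * p4 s + p3 s * p4 t"
      proof (rule pair_ineq)
        show "p1 t * p2 s \<le> p3 t * p4 s" using H[of t s] 3 by simp
        show "p1 s * p2 t \<le> p3 t * p4 s" using H[of s t] 3 by simp
        have "(p1 t * p2 s) * (p1 s * p2 t) = (p1 s * p2 s) * (p1 t * p2 t)" by simp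
        also have "\<dots> \<le> (p3 s * p4 s) * (p3 t * p4 t)"
          using mult_mono[OF H[of s s] H[of t t]] nn by simp
        also have "\<dots> = (p3 t * p4 s) * (p3 s * p4 t)" by simp
        finally show "(p1 t * p2 s) * (p1 s * p2 t) \<le> (p3 t * p4 s) * (p3 s * p4 t)" .
      qed (auto intro: mult_nonneg_nonneg nn)
      then show ?thesis unfolding x P_def Q_def by simp
    qed
  qed
  have "2 * infsum P UNIV = infsum (\<lambda>x. P x + P (prod.swap x)) UNIV"
    using infsum_add[OF sP sP'] eP by simp
  also have "\<dots> \<le> infsum (\<lambda>x. Q x + Q (prod.swap x)) UNIV"
    by (rule infsum_mono[OF summable_on_add[OF sP sP'] summable_on_add[OF sQ sQ'] pw])
  also have "\<dots> = 2 * infsum Q UNIV"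
    using infsum_add[OF sQ sQ'] eQ by simp
  finally have "infsum P UNIV \<le> infsum Q UNIV" by simp
  moreover have "infsum p1 UNIV * infsum p2 UNIV = infsum P UNIV"
    unfolding P_def using infsum_prod2[OF sm(1,2) nn(1,2)] by simp
  moreover have "infsum p3 UNIV * infsum p4 UNIV = infsum Q UNIV"
    unfolding Q_def using infsum_prod2[OF sm(3,4) nn(3,4)] by simp
  ultimately show ?thesis by simp
qed



lemma lc_basic:
  fixes h :: "int \<Rightarrow> real"
  assumes nn: "\<And>n. h n \<ge> 0" and lc: "log_concave_int h"
    and ab: "a \<le> b" and ac: "a \<le> c" and s: "a + d = b + c"
  shows "h a * h d \<le> h b * h c"
proof (cases "h a = 0 \<or> h d = 0")
  case True then show ?thesis using nn by (auto intro: mult_nonneg_nonneg)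
next
  case False
  then have ha: "h a > 0" and hd: "h d > 0" using nn by (auto simp: less_le)
  obtain I where I: "is_real_interval I" "{n. h n > 0} = {n. real_of_int n \<in> I}"
    and cc: "\<And>n. real_of_int n \<in> I \<Longrightarrow> h n ^ 2 \<ge> h (n + 1) * h (n - 1)"
    using lc unfolding log_concave_int_def by blast
  have aI: "real_of_int a \<in> I" using ha I(2) by blast
  have dI: "real_of_int d \<in> I" using hd I(2) by blast
  have inI: "real_of_int n \<in> I" if "a \<le> n" "n \<le> d" for n
  proof -
    have "\<forall>x\<in>I. \<forall>y\<in>I. \<forall>z. x \<le> z \<and> z \<le> y \<longrightarrow> z \<in> I"
      using I(1) unfolding is_real_interval_def by blast
    then have "real_of_int a \<le> real_of_int n \<and> real_of_int n \<le> real_of_int d \<longrightarrow> real_of_int n \<in> I"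
      using aI dI by blast
    then show ?thesis using that by simp
  qed
  have pos: "h n > 0" if "a \<le> n" "n \<le> d" for n
    using inI[OF that] I(2) by blast
  define L where "L n = ln (h n)" for n
  define D where "D n = L (n + 1) - L n" for n
  have Dstep: "D n \<le> D (n - 1)" if "a < n" "n < d" for n
  proof -
    have p: "h (n+1) > 0" "h (n - 1) > 0" "h n > 0" using pos that by auto
    have "h (n + 1) * h (n - 1) \<le> h n ^ 2" using cc inI that by auto
    then have "ln (h (n + 1) * h (n - 1)) \<le> ln (h n ^ 2)"
      using p by (subst ln_le_cancel_iff) auto
    then have "L (n+1) + L (n - 1) \<le> 2 * L n"
      using p unfolding L_def by (simp add: ln_mult ln_realpow)
    then show ?thesis unfolding D_def by simp
  qed
  have Dmono: "D (n + int k) \<le> D n" if "a \<le> n" "n + int k + 1 \<le> d" for n k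
    using that
  proof (induction k)
    case 0 then show ?case by simp
  next
    case (Suc k)
    have "D (n + int (Suc k)) \<le> D (n + int (Suc k) - 1)"
      using Suc.prems by (intro Dstep) auto
    also have "\<dots> = D (n + int k)" by simp
    also have "\<dots> \<le> D n" using Suc by auto
    finally show ?case .
  qed
  have main: "h a * h d \<le> h b * h c" if bc: "b \<le> c" and s: "a + d = b + c" and ab: "a \<le> b" for b c
  proof -
    define k where "k = nat (b - a)"
    have kk: "b = a + int k" "d = c + int k" using ab s unfolding k_def by auto
    have step: "L (c + int j) - L c \<le> L (a + int j) - L a" if "j \<le> k" for j
      using that
    proof (induction j)
      case 0 then show ?case by simp
    next
      case (Suc j)
      have "D (c + int j) \<le> D (a + int j)"
        using Dmono[of "a + int j" "nat (c - a)"] Suc.prems kk bc ab by (simp add: add.commute add.left_commute)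
      moreover have eqs: "c + int (Suc j) = c + int j + 1" "a + int (Suc j) = a + int j + 1" by auto
      ultimately show ?case using Suc unfolding D_def eqs by linarith
    qed
    from step[of k] have "L d + L a \<le> L b + L c" using kk by simp
    have p: "h a > 0" "h b > 0" "h c > 0" "h d > 0" using pos kk bc ab by auto
    have "ln (h a * h d) = L a + L d" "ln (h b * h c) = L b + L c"
      unfolding L_def using p by (auto simp: ln_mult)
    then have "ln (h a * h d) \<le> ln (h b * h c)" using \<open>L d + L a \<le> L b + L c\<close> by simp
    then show ?thesis using p by (subst (asm) ln_le_cancel_iff) auto
  qed
  show ?thesis
  proof (cases "b \<le> c")
    case True then show ?thesis using main s ab by blast
  next
    case False
    then have "h a * h d \<le> h c * h b" using main[of c b] s ac by auto
    then show ?thesis by (simp add: mult.commute)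
  qed
qed

lemma lc_tp2:
  fixes h :: "int \<Rightarrow> real"
  assumes nn: "\<And>n. h n \<ge> 0" and lc: "log_concave_int h"
  shows "h (x - s) * h (y - t) \<le> h (min x y - min s t) * h (max x y - max s t)"
proof -
  consider "x \<le> y" "s \<le> t" | "x \<le> y" "t < s" | "y < x" "s \<le> t" | "y < x" "t < s" by linarith
  then show ?thesis
  proof cases
    case 1 then show ?thesis by simp
  next
    case 2
    have "h (x - s) * h (y - t) \<le> h (x - t) * h (y - s)"
      by (rule lc_basic[OF nn lc]) (use 2 in auto)
    then show ?thesis using 2 by (simp add: mult.commute)
  next
    case 3
    have "h (y - t) * h (x - s) \<le> h (y - s) * h (x - t)"
      by (rule lc_basic[OF nn lc]) (use 3 in auto)
    then show ?thesis using 3 by (simp add: mult.commute)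
  next
    case 4 then show ?thesis by (simp add: mult.commute)
  qed
qed



definition vupd :: "int ^ 'd \<Rightarrow> 'd \<Rightarrow> int \<Rightarrow> int ^ 'd" where
  "vupd x i v = (\<chi> j. if j = i then v else x $ j)"

lemma vupd_nth[simp]: "vupd x i v $ j = (if j = i then v else x $ j)"
  by (simp add: vupd_def)

lemma vmin_nth[simp]: "vmin x y $ i = min (x $ i) (y $ i)" by (simp add: vmin_def)
lemma vmax_nth[simp]: "vmax x y $ i = max (x $ i) (y $ i)" by (simp add: vmax_def)

lemma vmin_vupd: "vmin (vupd x i s) (vupd y i t) = vupd (vmin x y) i (min s t)"
  by (simp add: vec_eq_iff)
lemma vmax_vupd: "vmax (vupd x i s) (vupd y i t) = vupd (vmax x y) i (max s t)"
  by (simp add: vec_eq_iff)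

lemma summable_shift:
  fixes h :: "int \<Rightarrow> real"
  assumes "h summable_on UNIV"
  shows "(\<lambda>v. h (c - v)) summable_on UNIV"
proof -
  have "bij_betw (\<lambda>v. c - v) (UNIV::int set) UNIV"
    by (rule bij_betwI[where g = "\<lambda>v. c - v"]) auto
  then show ?thesis using summable_on_reindex_bij_betw[of "\<lambda>v. c - v" UNIV UNIV h] assms by simp
qed

lemma step1d:
  fixes F :: "int ^ 'd \<Rightarrow> real" and h :: "int \<Rightarrow> real"
  assumes Fnn: "\<And>x. F x \<ge> 0" and Flsm: "log_supermodular F" and FM: "\<And>x. F x \<le> M"
    and hnn: "\<And>n. h n \<ge> 0" and hs: "h summable_on UNIV" and hlc: "log_concave_int h"
  shows "log_supermodular (\<lambda>x. \<Sum>\<^sub>\<infinity>v\<in>UNIV. h (x $ i - v) * F (vupd x i v))"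
  unfolding log_supermodular_def
proof (intro allI)
  fix x y :: "int ^ 'd"
  have M0: "M \<ge> 0" using Fnn[of x] FM[of x] by linarith
  have sm: "(\<lambda>v. h (w $ i - v) * F (vupd w i v)) summable_on UNIV" for w
  proof (rule summable_on_comparison_test)
    show "(\<lambda>v. M * h (w $ i - v)) summable_on UNIV"
      by (rule summable_on_cmult_right[OF summable_shift[OF hs]])
    show "h (w $ i - v) * F (vupd w i v) \<le> M * h (w $ i - v)" for v
      using FM[of "vupd w i v"] hnn[of "w $ i - v"] by (simp add: mult.commute mult_right_mono)
    show "0 \<le> h (w $ i - v) * F (vupd w i v)" for v using hnn Fnn by simp
  qed
  show "(\<Sum>\<^sub>\<infinity>v\<in>UNIV. h (x $ i - v) * F (vupd x i v)) * (\<Sum>\<^sub>\<infinity>v\<in>UNIV. h (y $ i - v) * F (vupd y i v))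
    \<le> (\<Sum>\<^sub>\<infinity>v\<in>UNIV. h (vmin x y $ i - v) * F (vupd (vmin x y) i v)) *
      (\<Sum>\<^sub>\<infinity>v\<in>UNIV. h (vmax x y $ i - v) * F (vupd (vmax x y) i v))"
  proof (rule four_chain[OF _ _ _ _ sm sm sm sm])
    fix s t
    have h1: "h (x $ i - s) * h (y $ i - t) \<le> h (vmin x y $ i - min s t) * h (vmax x y $ i - max s t)"
      using lc_tp2[OF hnn hlc] by simp
    have h2: "F (vupd x i s) * F (vupd y i t) \<le> F (vupd (vmin x y) i (min s t)) * F (vupd (vmax x y) i (max s t))"
      using Flsm unfolding log_supermodular_def by (metis vmin_vupd vmax_vupd)
    have "(h (x $ i - s) * h (y $ i - t)) * (F (vupd x i s) * F (vupd y i t))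
      \<le> (h (vmin x y $ i - min s t) * h (vmax x y $ i - max s t)) * (F (vupd (vmin x y) i (min s t)) * F (vupd (vmax x y) i (max s t)))"
      by (rule mult_mono[OF h1 h2]) (use hnn Fnn in simp_all)
    then show "h (x $ i - s) * F (vupd x i s) * (h (y $ i - t) * F (vupd y i t))
      \<le> h (vmin x y $ i - min s t) * F (vupd (vmin x y) i (min s t)) * (h (vmax x y $ i - max s t) * F (vupd (vmax x y) i (max s t)))"
      by (simp add: algebra_simps)
  qed (use hnn Fnn in simp_all)
qed



definition Gs :: "('d \<Rightarrow> int \<Rightarrow> real) \<Rightarrow> 'd set \<Rightarrow> int ^ 'd \<Rightarrow> real" where
  "Gs gs S z = (\<Prod>j\<in>S. gs j (z $ j)) * (if \<forall>j. j \<notin> S \<longrightarrow> z $ j = 0 then 1 else 0)"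

lemma Gs_nonneg: "(\<And>j n. gs j n \<ge> 0) \<Longrightarrow> Gs gs S z \<ge> 0"
  unfolding Gs_def by (auto intro: prod_nonneg)

lemma Gs_zero: "i \<notin> S \<Longrightarrow> w $ i \<noteq> 0 \<Longrightarrow> Gs gs S w = 0"
  unfolding Gs_def by auto

lemma Gs_insert:
  assumes "i \<notin> S" "finite S" "w $ i = 0"
  shows "Gs gs (insert i S) (vupd w i t) = gs i t * Gs gs S w"
proof -
  have "(\<Prod>j\<in>insert i S. gs j (vupd w i t $ j)) = gs i t * (\<Prod>j\<in>S. gs j (w $ j))"
    using assms by (auto intro!: prod.cong)
  moreover have "(\<forall>j. j \<notin> insert i S \<longrightarrow> vupd w i t $ j = 0) \<longleftrightarrow> (\<forall>j. j \<notin> S \<longrightarrow> w $ j = 0)"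
    using assms by auto
  ultimately show ?thesis unfolding Gs_def by simp
qed

lemma Gs_empty: "Gs gs {} z = (if z = 0 then 1 else 0)"
  unfolding Gs_def by (simp add: vec_eq_iff)

lemma bij_split:
  fixes c :: int and i :: "'d::finite"
  shows "bij_betw (\<lambda>(v, w). vupd w i (c - v)) (UNIV \<times> {w. w $ i = 0}) (UNIV :: (int ^ 'd) set)"
proof (rule bij_betwI[where g = "\<lambda>z. (c - z $ i, vupd z i 0)"])
  show "(\<lambda>(v, w). vupd w i (c - v)) \<in> UNIV \<times> {w. w $ i = 0} \<rightarrow> UNIV" by simp
  show "(\<lambda>z. (c - z $ i, vupd z i 0)) \<in> UNIV \<rightarrow> UNIV \<times> {w. w $ i = 0}" by simp
  show "(\<lambda>z. (c - z $ i, vupd z i 0)) ((\<lambda>(v, w). vupd w i (c - v)) p) = p" if "p \<in> UNIV \<times> {w. w $ i = 0}" for p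
    using that by (cases p) (auto simp: vec_eq_iff)
  show "(\<lambda>(v, w). vupd w i (c - v)) ((\<lambda>z. (c - z $ i, vupd z i 0)) z) = z" for z
    by (auto simp: vec_eq_iff)
qed

lemma Gs_summable:
  fixes gs :: "'d::finite \<Rightarrow> int \<Rightarrow> real"
  assumes nn: "\<And>j n. gs j n \<ge> 0" and sm: "\<And>j. gs j summable_on UNIV" and fin: "finite S"
  shows "Gs gs S summable_on UNIV"
  using fin
proof (induction S rule: finite_induct)
  case empty
  have "Gs gs {} summable_on UNIV \<longleftrightarrow> Gs gs {} summable_on {0}"
    by (rule summable_on_cong_neutral) (auto simp: Gs_empty)
  then show ?case by simp
next
  case (insert i S)
  let ?W = "{w :: int ^ 'd. w $ i = 0}"
  have "(\<lambda>(v,w). gs i (0 - v) * Gs gs S w) summable_on (UNIV \<times> ?W)"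
    by (rule summable_prod2[OF summable_shift[OF sm] summable_on_subset_banach[OF insert.IH subset_UNIV]])
       (auto intro: nn Gs_nonneg)
  moreover have "(\<lambda>p. Gs gs (insert i S) ((\<lambda>(v, w). vupd w i (0 - v)) p)) summable_on (UNIV \<times> ?W)
     \<longleftrightarrow> (\<lambda>(v,w). gs i (0 - v) * Gs gs S w) summable_on (UNIV \<times> ?W)"
    by (rule summable_on_cong) (auto simp: Gs_insert insert.hyps)
  ultimately show ?case
    using summable_on_reindex_bij_betw[OF bij_split[of i 0], of "Gs gs (insert i S)"] by simp
qed

lemma bounded_summable:
  fixes f :: "'a \<Rightarrow> real"
  assumes "\<And>x. f x \<ge> 0" "f summable_on UNIV"
  shows "f x \<le> infsum f UNIV"
proof -
  have "infsum f {x} \<le> infsum f UNIV"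
    by (rule infsum_mono2) (use assms in auto)
  then show ?thesis by simp
qed

lemma conv_insert:
  fixes f :: "int ^ 'd \<Rightarrow> real" and gs :: "'d::finite \<Rightarrow> int \<Rightarrow> real"
  assumes nn: "\<And>j n. gs j n \<ge> 0" and sm: "\<And>j. gs j summable_on UNIV"
    and fnn: "\<And>x. f x \<ge> 0" and fs: "f summable_on UNIV"
    and fin: "finite S" and iS: "i \<notin> S"
  shows "conv f (Gs gs (insert i S)) x = (\<Sum>\<^sub>\<infinity>v\<in>UNIV. gs i (x $ i - v) * conv f (Gs gs S) (vupd x i v))"
proof -
  let ?W = "{w :: int ^ 'd. w $ i = 0}"
  let ?b = "\<lambda>(v, w). vupd w i (x $ i - v)"
  let ?G = "Gs gs (insert i S)"
  have bij: "bij_betw ?b (UNIV \<times> ?W) UNIV" by (rule bij_split)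
  have Gsm: "?G summable_on UNIV" using Gs_summable[OF nn sm] fin by simp
  have s1: "(\<lambda>z. f (x - z) * ?G z) summable_on UNIV"
  proof (rule summable_on_comparison_test)
    show "(\<lambda>z. infsum f UNIV * ?G z) summable_on UNIV" by (rule summable_on_cmult_right[OF Gsm])
    show "f (x - z) * ?G z \<le> infsum f UNIV * ?G z" for z
      by (rule mult_right_mono[OF bounded_summable[OF fnn fs] Gs_nonneg[of gs, OF nn]])
    show "0 \<le> f (x - z) * ?G z" for z using fnn Gs_nonneg[of gs, OF nn] by simp
  qed
  have eqp: "f (x - ?b p) * ?G (?b p) = (\<lambda>(v,w). gs i (x $ i - v) * (f (vupd x i v - w) * Gs gs S w)) p"
    if pW: "p \<in> UNIV \<times> ?W" for p
  proof -
    obtain v w where p: "p = (v, w)" and w: "w $ i = 0" using pW by (cases p) auto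
    have "x - vupd w i (x $ i - v) = vupd x i v - w" using w by (auto simp: vec_eq_iff)
    moreover have "?G (?b p) = gs i (x $ i - v) * Gs gs S w" using p Gs_insert[OF iS fin w] by simp
    ultimately show ?thesis using p by simp
  qed
  have s2: "(\<lambda>(v,w). gs i (x $ i - v) * (f (vupd x i v - w) * Gs gs S w)) summable_on (UNIV \<times> ?W)"
  proof -
    have "(\<lambda>p. f (x - ?b p) * ?G (?b p)) summable_on (UNIV \<times> ?W)"
      using summable_on_reindex_bij_betw[OF bij, of "\<lambda>z. f (x - z) * ?G z"] s1 by simp
    moreover have "(\<lambda>p. f (x - ?b p) * ?G (?b p)) summable_on (UNIV \<times> ?W) \<longleftrightarrow>
       (\<lambda>(v,w). gs i (x $ i - v) * (f (vupd x i v - w) * Gs gs S w)) summable_on (UNIV \<times> ?W)"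
      by (rule summable_on_cong) (rule eqp)
    ultimately show ?thesis by simp
  qed
  have "conv f ?G x = infsum (\<lambda>p. f (x - ?b p) * ?G (?b p)) (UNIV \<times> ?W)"
    unfolding conv_def using infsum_reindex_bij_betw[OF bij, of "\<lambda>z. f (x - z) * ?G z"] by simp
  also have "\<dots> = infsum (\<lambda>(v,w). gs i (x $ i - v) * (f (vupd x i v - w) * Gs gs S w)) (UNIV \<times> ?W)"
    by (rule infsum_cong[OF eqp])
  also have "\<dots> = (\<Sum>\<^sub>\<infinity>v\<in>UNIV. \<Sum>\<^sub>\<infinity>w\<in>?W. gs i (x $ i - v) * (f (vupd x i v - w) * Gs gs S w))"
    using infsum_Sigma'_banach[of "\<lambda>v w. gs i (x $ i - v) * (f (vupd x i v - w) * Gs gs S w)" UNIV "\<lambda>_. ?W"] s2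
    by simp
  also have "\<dots> = (\<Sum>\<^sub>\<infinity>v\<in>UNIV. gs i (x $ i - v) * (\<Sum>\<^sub>\<infinity>w\<in>?W. f (vupd x i v - w) * Gs gs S w))"
    by (simp add: infsum_cmult_right')
  also have "\<dots> = (\<Sum>\<^sub>\<infinity>v\<in>UNIV. gs i (x $ i - v) * conv f (Gs gs S) (vupd x i v))"
  proof (rule infsum_cong)
    fix v
    have "(\<Sum>\<^sub>\<infinity>w\<in>?W. f (vupd x i v - w) * Gs gs S w) = (\<Sum>\<^sub>\<infinity>w\<in>UNIV. f (vupd x i v - w) * Gs gs S w)"
      by (rule infsum_cong_neutral) (auto simp: Gs_zero[OF iS])
    then show "gs i (x $ i - v) * (\<Sum>\<^sub>\<infinity>w\<in>?W. f (vupd x i v - w) * Gs gs S w) = gs i (x $ i - v) * conv f (Gs gs S) (vupd x i v)"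
      unfolding conv_def by simp
  qed
  finally show ?thesis .
qed



lemma conv_bound:
  fixes f G :: "int ^ 'd \<Rightarrow> real"
  assumes fnn: "\<And>x. f x \<ge> 0" and fs: "f summable_on UNIV"
    and Gnn: "\<And>x. G x \<ge> 0" and Gs: "G summable_on UNIV"
  shows "conv f G x \<ge> 0" "conv f G x \<le> infsum f UNIV * infsum G UNIV"
proof -
  have s1: "(\<lambda>z. f (x - z) * G z) summable_on UNIV"
  proof (rule summable_on_comparison_test)
    show "(\<lambda>z. infsum f UNIV * G z) summable_on UNIV" by (rule summable_on_cmult_right[OF Gs])
    show "f (x - z) * G z \<le> infsum f UNIV * G z" for z
      by (rule mult_right_mono[OF bounded_summable[OF fnn fs] Gnn])
    show "0 \<le> f (x - z) * G z" for z by (rule mult_nonneg_nonneg[OF fnn Gnn])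
  qed
  show "conv f G x \<ge> 0" unfolding conv_def by (rule infsum_nonneg) (rule mult_nonneg_nonneg[OF fnn Gnn])
  have "conv f G x \<le> (\<Sum>\<^sub>\<infinity>z\<in>UNIV. infsum f UNIV * G z)"
    unfolding conv_def
    by (rule infsum_mono[OF s1 summable_on_cmult_right[OF Gs]])
       (rule mult_right_mono[OF bounded_summable[OF fnn fs] Gnn])
  also have "\<dots> = infsum f UNIV * infsum G UNIV" by (simp add: infsum_cmult_right')
  finally show "conv f G x \<le> infsum f UNIV * infsum G UNIV" .
qed

theorem theorem3p5:
  fixes f g :: "int ^ 'd \<Rightarrow> real" and gs :: "'d \<Rightarrow> int \<Rightarrow> real"
  assumes g_prod: "\<And>z. g z = (\<Prod>i\<in>UNIV. gs i (z $ i))"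
    and gs_nonneg: "\<And>i n. gs i n \<ge> 0"
    and gs_summable: "\<And>i. gs i summable_on UNIV"
    and gs_lc: "\<And>i. log_concave_int (gs i)"
    and f_nonneg: "\<And>x. f x \<ge> 0"
    and f_summable: "f summable_on UNIV"
    and f_lsm: "log_supermodular f"
  shows "log_supermodular (conv f g)"
proof -
  have all: "log_supermodular (conv f (Gs gs S))" if "finite S" for S
    using that
  proof (induction S rule: finite_induct)
    case empty
    have "conv f (Gs gs {}) x = f x" for x
    proof -
      have "conv f (Gs gs {}) x = (\<Sum>\<^sub>\<infinity>z\<in>{0}. f (x - z) * Gs gs {} z)"
        unfolding conv_def by (rule infsum_cong_neutral) (auto simp: Gs_empty)
      also have "\<dots> = f x" by (simp add: Gs_empty)
      finally show ?thesis .
    qed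
    then have "conv f (Gs gs {}) = f" by (rule ext)
    then show ?case using f_lsm by simp
  next
    case (insert i S)
    have e: "conv f (Gs gs (insert i S)) = (\<lambda>x. \<Sum>\<^sub>\<infinity>v\<in>UNIV. gs i (x $ i - v) * conv f (Gs gs S) (vupd x i v))"
      by (rule ext, rule conv_insert[OF gs_nonneg gs_summable f_nonneg f_summable insert.hyps])
    have GS: "Gs gs S summable_on UNIV" by (rule Gs_summable[OF gs_nonneg gs_summable insert.hyps(1)])
    show ?case unfolding e
      by (rule step1d[OF conv_bound(1)[OF f_nonneg f_summable Gs_nonneg[of gs, OF gs_nonneg] GS]
              insert.IH conv_bound(2)[OF f_nonneg f_summable Gs_nonneg[of gs, OF gs_nonneg] GS]
              gs_nonneg gs_summable gs_lc])
  qed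
  have "Gs gs UNIV = g" by (rule ext) (simp add: Gs_def g_prod)
  then show ?thesis using all[of UNIV] by simp
qed

end
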